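(* Let $(X,r)$ be a finite non-degenerate solution and $a,a',b,b'\in A=A(X,r)$. (1) If $\sigma_a=\sigma_{a'}$ and $\lambda_a=\lambda_{a'}$, then $\lambda_{a\circ b}=\lambda_{a'\circ b}$, $\rho_{b\circ a}=\rho_{b\circ a'}$, $\sigma_{b\circ a}=\sigma_{b\circ a'}$, $\lambda_{a+b}=\lambda_{a'+b}$, $\rho_{a+b}=\rho_{a'+b}$ and $\sigma_{a+b}=\sigma_{a'+b}$. (2) If $\sigma_b=\sigma_{b'}$ and $\lambda_b=\lambda_{b'}$, then $\lambda_{a\circ b}=\lambda_{a\circ b'}$, $\rho_{b\circ a}=\rho_{b'\circ a}$, $\sigma_{b\circ a}=\sigma_{b'\circ a}$, $\lambda_{a+b}=\lambda_{a+b'}$, $\rho_{a+b}=\rho_{a+b'}$ and $\sigma_{a+b}=\sigma_{a+b'}$.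
   Context: A set-theoretic solution $(X,r)$ of the Yang--Baxter equation: $X$ non-empty, $r\colon X\times X\to X\times X$ satisfying $(r\times\mathrm{id})(\mathrm{id}\times r)(r\times\mathrm{id})=(\mathrm{id}\times r)(r\times\mathrm{id})(\mathrm{id}\times r)$; write $r(x,y)=(\lambda_x(y),\rho_y(x))$; non-degenerate means $r$ bijective and all $\lambda_x,\rho_y$ bijective. Put $\sigma_y(x)=\lambda_y\rho_{\lambda_x^{-1}(y)}(x)$. Let $M$ be the monoid with presentation $\langle X\mid x\circ y=\lambda_x(y)\circ\rho_y(x)\ (x,y\in X)\rangle$ and $A$ the monoid $\langle X\mid x+y=y+\sigma_y(x)\ (x,y\in X)\rangle$. The following known structure is used: there is a bijection $M\to A$ fixing $X$; identifying $M$ and $A$ through it, the set $A$ carries two monoid operations $\circ$ and $+$ with common identity, and maps $a\mapsto\lambda_a$ (a monoid morphism $(A,\circ)\to\mathrm{Aut}(A,+)$), $a\mapsto\rho_a$ (a monoid anti-morphism $(A,\circ)\to\mathrm{Sym}(A)$) and $a\mapsto\sigma_a$ (a monoid anti-morphism $(A,+)\to\mathrm{Aut}(A,+)$), extending the given maps on $X$, such that for all $a,b,c\in A$: $a\circ b=a+\lambda_a(b)$, $a\circ b=\lambda_a(b)\circ\rho_b(a)$, $a+b=b+\sigma_b(a)$, $\sigma_{\lambda_a(b)}\lambda_a=\lambda_a\sigma_b$, $\lambda_a\lambda_b=\lambda_{\lambda_a(b)}\lambda_{\rho_b(a)}$, and $\sigma_b(a)=\lambda_b\rho_{\lambda_a^{-1}(b)}(a)$.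 All these maps are bijections of $A$ mapping $X$ onto $X$. *)

theory Defs
  imports Main
begin

text \<open>A set-theoretic solution on a finite type 'x is given by the two component maps
  lam, rho with  r(x,y) = (lam x y, rho y x).\<close>

definition sol_r :: "('x \<Rightarrow> 'x \<Rightarrow> 'x) \<Rightarrow> ('x \<Rightarrow> 'x \<Rightarrow> 'x) \<Rightarrow> 'x \<times> 'x \<Rightarrow> 'x \<times> 'x" where
  "sol_r l p = (\<lambda>(x, y). (l x y, p y x))"

definition r12 :: "('x \<times> 'x \<Rightarrow> 'x \<times> 'x) \<Rightarrow> 'x \<times> 'x \<times> 'x \<Rightarrow> 'x \<times> 'x \<times> 'x" where
  "r12 r = (\<lambda>(x, y, z). (fst (r (x, y)), snd (r (x, y)), z))"

definition r23 :: "('x \<times> 'x \<Rightarrow> 'x \<times> 'x) \<Rightarrow> 'x \<times> 'x \<times> 'x \<Rightarrow> 'x \<times> 'x \<times> 'x" where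
  "r23 r = (\<lambda>(x, y, z). (x, r (y, z)))"

definition is_solution :: "('x \<Rightarrow> 'x \<Rightarrow> 'x) \<Rightarrow> ('x \<Rightarrow> 'x \<Rightarrow> 'x) \<Rightarrow> bool" where
  "is_solution l p \<longleftrightarrow>
     r12 (sol_r l p) \<circ> r23 (sol_r l p) \<circ> r12 (sol_r l p)
       = r23 (sol_r l p) \<circ> r12 (sol_r l p) \<circ> r23 (sol_r l p)"

definition nondegenerate :: "('x \<Rightarrow> 'x \<Rightarrow> 'x) \<Rightarrow> ('x \<Rightarrow> 'x \<Rightarrow> 'x) \<Rightarrow> bool" where
  "nondegenerate l p \<longleftrightarrow> bij (sol_r l p) \<and> (\<forall>x. bij (l x)) \<and> (\<forall>y. bij (p y))"

text \<open>The structure monoid M = A(X,r), represented by words over X modulo the congruence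
  generated by  x y = lam_x(y) rho_y(x).  The monoid operation \<open>\<circ>\<close> is concatenation.\<close>

inductive M_step :: "('x \<Rightarrow> 'x \<Rightarrow> 'x) \<Rightarrow> ('x \<Rightarrow> 'x \<Rightarrow> 'x) \<Rightarrow> 'x list \<Rightarrow> 'x list \<Rightarrow> bool"
  for l p where
  "M_step l p (s @ [x, y] @ t) (s @ [l x y, p y x] @ t)"

definition Meq :: "('x \<Rightarrow> 'x \<Rightarrow> 'x) \<Rightarrow> ('x \<Rightarrow> 'x \<Rightarrow> 'x) \<Rightarrow> 'x list \<Rightarrow> 'x list \<Rightarrow> bool" where
  "Meq l p = equivclp (M_step l p)"

text \<open>Extensions of lambda, rho to words (obtained by braiding letters with r).\<close>

fun lamL :: "('x \<Rightarrow> 'x \<Rightarrow> 'x) \<Rightarrow> ('x \<Rightarrow> 'x \<Rightarrow> 'x) \<Rightarrow> 'x \<Rightarrow> 'x list \<Rightarrow> 'x list" where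
  "lamL l p x [] = []"
| "lamL l p x (y # w) = l x y # lamL l p (p y x) w"

text \<open>lamW l p a b = lambda_a(b)\<close>
fun lamW :: "('x \<Rightarrow> 'x \<Rightarrow> 'x) \<Rightarrow> ('x \<Rightarrow> 'x \<Rightarrow> 'x) \<Rightarrow> 'x list \<Rightarrow> 'x list \<Rightarrow> 'x list" where
  "lamW l p [] b = b"
| "lamW l p (x # u) b = lamL l p x (lamW l p u b)"

text \<open>rhoL l p b x = rho_b(x) for a letter x\<close>
fun rhoL :: "('x \<Rightarrow> 'x \<Rightarrow> 'x) \<Rightarrow> ('x \<Rightarrow> 'x \<Rightarrow> 'x) \<Rightarrow> 'x list \<Rightarrow> 'x \<Rightarrow> 'x" where
  "rhoL l p [] x = x"
| "rhoL l p (y # w) x = rhoL l p w (p y x)"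

text \<open>rhoW l p b a = rho_b(a)\<close>
fun rhoW :: "('x \<Rightarrow> 'x \<Rightarrow> 'x) \<Rightarrow> ('x \<Rightarrow> 'x \<Rightarrow> 'x) \<Rightarrow> 'x list \<Rightarrow> 'x list \<Rightarrow> 'x list" where
  "rhoW l p b [] = []"
| "rhoW l p b (x # u) = rhoL l p (lamW l p u b) x # rhoW l p b u"

text \<open>sigmaW l p b a = sigma_b(a) = lambda_b rho_{lambda_a^{-1}(b)}(a)\<close>
definition sigmaW :: "('x \<Rightarrow> 'x \<Rightarrow> 'x) \<Rightarrow> ('x \<Rightarrow> 'x \<Rightarrow> 'x) \<Rightarrow> 'x list \<Rightarrow> 'x list \<Rightarrow> 'x list" where
  "sigmaW l p b a = lamW l p b (rhoW l p (inv (lamW l p a) b) a)"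

text \<open>The additive operation, via  a \<circ> b = a + lambda_a(b), i.e. a + b = a \<circ> lambda_a^{-1}(b).\<close>
definition plusW :: "('x \<Rightarrow> 'x \<Rightarrow> 'x) \<Rightarrow> ('x \<Rightarrow> 'x \<Rightarrow> 'x) \<Rightarrow> 'x list \<Rightarrow> 'x list \<Rightarrow> 'x list" where
  "plusW l p a b = a @ inv (lamW l p a) b"

definition map_eqA :: "('x \<Rightarrow> 'x \<Rightarrow> 'x) \<Rightarrow> ('x \<Rightarrow> 'x \<Rightarrow> 'x) \<Rightarrow> ('x list \<Rightarrow> 'x list) \<Rightarrow> ('x list \<Rightarrow> 'x list) \<Rightarrow> bool" where
  "map_eqA l p f g \<longleftrightarrow> (\<forall>c. Meq l p (f c) (g c))"

end

theory Submission
  imports Defs "HOL-Library.FuncSet"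
begin

lemma equivclp_map:
  assumes "\<And>a b. r a b \<Longrightarrow> equivclp s (f a) (f b)" and "equivclp r x y"
  shows "equivclp s (f x) (f y)"
  using assms(2)
proof (induction rule: equivclp_induct)
  case base then show ?case by simp
next
  case (step y z)
  from step.hyps(2) have "equivclp s (f y) (f z)"
    using assms(1) equivclp_sym by metis
  with step.IH show ?case by (rule equivclp_trans)
qed

lemma equivclp_eq_map:
  assumes "\<And>a b. r a b \<Longrightarrow> f a = f b" and "equivclp r x y"
  shows "f x = f y"
  using assms(2)
proof (induction rule: equivclp_induct)
  case base then show ?case by simp
next
  case (step y z)
  then show ?case using assms(1) by metis
qed

locale yb =
  fixes l p :: "'x::finite \<Rightarrow> 'x \<Rightarrow> 'x"
  assumes Y1: "\<And>x y z. l x (l y z) = l (l x y) (l (p y x) z)"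
    and Y2: "\<And>x y z. p z (p y x) = p (p z y) (p (l y z) x)"
    and Y3: "\<And>x y z. l (p (l y z) x) (p z y) = p (l (p y x) z) (l x y)"
    and bl: "\<And>x. bij (l x)" and bp: "\<And>y. bij (p y)"
begin

abbreviation eqv (infix "\<approx>" 50) where "u \<approx> v \<equiv> Meq l p u v"

lemma Mstep_len: "M_step l p u v \<Longrightarrow> length u = length v"
  by (induction rule: M_step.induct) auto

lemma Meq_len: "u \<approx> v \<Longrightarrow> length u = length v"
  unfolding Meq_def by (rule equivclp_eq_map[where f=length]) (auto dest: Mstep_len)

lemma Mstep_app: "M_step l p u v \<Longrightarrow> M_step l p (s @ u @ t) (s @ v @ t)"
proof (induction rule: M_step.induct)
  case (1 s0 x y t0)
  have "M_step l p ((s @ s0) @ [x, y] @ (t0 @ t)) ((s @ s0) @ [l x y, p y x] @ (t0 @ t))"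
    by (rule M_step.intros)
  then show ?case by simp
qed

lemma Meq_app: "u \<approx> v \<Longrightarrow> (s @ u @ t) \<approx> (s @ v @ t)"
  unfolding Meq_def by (rule equivclp_map[where f="\<lambda>w. s @ w @ t"]) (auto dest: Mstep_app)

lemma Meq_refl[simp]: "u \<approx> u" unfolding Meq_def by simp
lemma Meq_sym: "u \<approx> v \<Longrightarrow> v \<approx> u" unfolding Meq_def by (rule equivclp_sym)
lemma Meq_trans: "u \<approx> v \<Longrightarrow> v \<approx> w \<Longrightarrow> u \<approx> w" unfolding Meq_def by (rule equivclp_trans)

lemma Meq_cons: "u \<approx> v \<Longrightarrow> (x # u) \<approx> (x # v)"
  using Meq_app[of u v "[x]" "[]"] by simp
lemma Meq_appL: "u \<approx> v \<Longrightarrow> (s @ u) \<approx> (s @ v)"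
  using Meq_app[of u v s "[]"] by simp
lemma Meq_appR: "u \<approx> v \<Longrightarrow> (u @ t) \<approx> (v @ t)"
  using Meq_app[of u v "[]" t] by simp
lemma Meq_app2: "u \<approx> v \<Longrightarrow> u' \<approx> v' \<Longrightarrow> (u @ u') \<approx> (v @ v')"
  by (meson Meq_appL Meq_appR Meq_trans)

lemma Meq_step: "[x, y] \<approx> [l x y, p y x]"
  unfolding Meq_def using M_step.intros[of l p "[]" x y "[]"] by auto

lemma Meq_single: "[x] \<approx> v \<Longrightarrow> v = [x]"
proof -
  have A: "\<And>u v. M_step l p u v \<Longrightarrow> length u \<ge> 2"
    by (erule M_step.cases) auto
  assume "[x] \<approx> v"
  then have "equivclp (M_step l p) [x] v" unfolding Meq_def .
  then show ?thesis
  proof (induction rule: equivclp_induct)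
    case base then show ?case by simp
  next
    case (step y z) then show ?case using Mstep_len A by fastforce
  qed
qed

lemma len_lamL[simp]: "length (lamL l p x w) = length w"
  by (induction w arbitrary: x) auto
lemma len_lamW[simp]: "length (lamW l p a w) = length w"
  by (induction a) auto
lemma len_rhoW[simp]: "length (rhoW l p b a) = length a"
  by (induction a) auto

lemma L1: "lamW l p (u @ v) w = lamW l p u (lamW l p v w)"
  by (induction u) auto
lemma lamL_app: "lamL l p x (u @ v) = lamL l p x u @ lamL l p (rhoL l p u x) v"
  by (induction u arbitrary: x) auto
lemma rhoL_app: "rhoL l p (u @ v) x = rhoL l p v (rhoL l p u x)"
  by (induction u arbitrary: x) auto
lemma L2: "lamW l p u (v @ w) = lamW l p u v @ lamW l p (rhoW l p v u) w"
  by (induction u) (auto simp: lamL_app)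
lemma L4: "rhoW l p w (u @ v) = rhoW l p (lamW l p v w) u @ rhoW l p w v"
  by (induction u) (auto simp: L1)
lemma lamW_single[simp]: "lamW l p [x] w = lamL l p x w" by simp
lemma rhoW_single[simp]: "rhoW l p w [x] = [rhoL l p w x]" by simp
lemma lamW_Nil2[simp]: "lamW l p u [] = []" by (induction u) auto
lemma rhoW_Nil1[simp]: "rhoW l p [] u = u"
proof (induction u)
  case (Cons x u) then show ?case by simp
qed simp

lemma L3: "rhoW l p (v @ w) u = rhoW l p w (rhoW l p v u)"
proof (induction u)
  case Nil then show ?case by simp
next
  case (Cons x u)
  have "rhoW l p (v @ w) (x # u) = rhoL l p (lamW l p u (v @ w)) x # rhoW l p w (rhoW l p v u)"
    using Cons by simp
  also have "lamW l p u (v @ w) = lamW l p u v @ lamW l p (rhoW l p v u) w" by (rule L2)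
  finally show ?case by (simp add: rhoL_app)
qed

end

context yb begin

lemma P123: "lamL l p x (lamL l p y w) = lamL l p (l x y) (lamL l p (p y x) w)
  \<and> rhoL l p w (p y x) = p (rhoL l p w y) (rhoL l p (lamL l p y w) x)
  \<and> l (rhoL l p (lamL l p y w) x) (rhoL l p w y) = rhoL l p (lamL l p (p y x) w) (l x y)"
proof (induction w arbitrary: x y)
  case Nil then show ?case by simp
next
  case (Cons z w)
  have IH1: "lamL l p (p (l y z) x) (lamL l p (p z y) w) = lamL l p (l (p (l y z) x) (p z y)) (lamL l p (p (p z y) (p (l y z) x)) w)"
    and IH2: "rhoL l p w (p (p z y) (p (l y z) x)) = p (rhoL l p w (p z y)) (rhoL l p (lamL l p (p z y) w) (p (l y z) x))"
    and IH3: "l (rhoL l p (lamL l p (p z y) w) (p (l y z) x)) (rhoL l p w (p z y)) = rhoL l p (lamL l p (p (p z y) (p (l y z) x)) w) (l (p (l y z) x) (p z y))"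
    using Cons[of "p (l y z) x" "p z y"] by blast+
  have e1: "l (p (l y z) x) (p z y) = p (l (p y x) z) (l x y)" by (rule Y3)
  have e2: "p (p z y) (p (l y z) x) = p z (p y x)" by (rule Y2[symmetric])
  have c1: "lamL l p x (lamL l p y (z # w)) = lamL l p (l x y) (lamL l p (p y x) (z # w))"
    using IH1 unfolding e1 e2 by (simp add: Y1[of x y z])
  have c2: "rhoL l p (z # w) (p y x) = p (rhoL l p (z # w) y) (rhoL l p (lamL l p y (z # w)) x)"
    using IH2 unfolding e1 e2 by simp
  have c3: "l (rhoL l p (lamL l p y (z # w)) x) (rhoL l p (z # w) y) = rhoL l p (lamL l p (p y x) (z # w)) (l x y)"
    using IH3 unfolding e1 e2 by simp
  show ?case using c1 c2 c3 by blast
qed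

lemmas P1 = P123[THEN conjunct1]
lemmas P2 = P123[THEN conjunct2, THEN conjunct1]
lemmas P3 = P123[THEN conjunct2, THEN conjunct2]

lemma lamW_Mstep: "M_step l p a a' \<Longrightarrow> lamW l p a = lamW l p a'"
proof (induction rule: M_step.induct)
  case (1 s x y t)
  show ?case by (rule ext) (simp add: L1 P1[of x y])
qed

lemma rhoL_Mstep: "M_step l p u v \<Longrightarrow> rhoL l p u x = rhoL l p v x"
proof (induction rule: M_step.induct)
  case (1 s y z t)
  show ?case by (simp add: rhoL_app Y2[where x="rhoL l p s x" and y=y and z=z])
qed

lemma lamL_Mstep: "M_step l p u v \<Longrightarrow> M_step l p (lamL l p x u) (lamL l p x v)"
proof (induction rule: M_step.induct)
  case (1 s y z t)
  define x' where "x' = rhoL l p s x"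
  have M: "M_step l p (lamL l p x s @ [l x' y, l (p y x') z] @ lamL l p (p z (p y x')) t)
     (lamL l p x s @ [l (l x' y) (l (p y x') z), p (l (p y x') z) (l x' y)] @ lamL l p (p z (p y x')) t)"
    by (rule M_step.intros)
  have A: "lamL l p x (s @ [y, z] @ t) = lamL l p x s @ [l x' y, l (p y x') z] @ lamL l p (p z (p y x')) t"
    by (simp add: lamL_app x'_def)
  have B: "lamL l p x (s @ [l y z, p z y] @ t) = lamL l p x s @ [l (l x' y) (l (p y x') z), p (l (p y x') z) (l x' y)] @ lamL l p (p z (p y x')) t"
    by (simp add: lamL_app x'_def[symmetric] Y1[of x' y z] Y3[where x=x' and y=y and z=z] Y2[where x=x' and y=y and z=z, symmetric])
  show ?case unfolding A B by (rule M)
qed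

lemmas [trans] = Meq_trans

lemma lamL_Meq: "u \<approx> v \<Longrightarrow> lamL l p x u \<approx> lamL l p x v"
  unfolding Meq_def by (rule equivclp_map) (auto dest: lamL_Mstep)

lemma lamW_Meq: "u \<approx> v \<Longrightarrow> lamW l p a u \<approx> lamW l p a v"
  by (induction a) (auto intro: lamL_Meq)

lemma lamW_sub: "a \<approx> a' \<Longrightarrow> lamW l p a = lamW l p a'"
  unfolding Meq_def by (rule equivclp_eq_map) (auto dest: lamW_Mstep)

lemma rhoL_Meq: "u \<approx> v \<Longrightarrow> rhoL l p u x = rhoL l p v x"
  unfolding Meq_def by (rule equivclp_eq_map[where f="\<lambda>u. rhoL l p u x"]) (auto dest: rhoL_Mstep)

lemma rhoW_sub: "b \<approx> b' \<Longrightarrow> rhoW l p b u = rhoW l p b' u"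
proof (induction u)
  case (Cons x u)
  then show ?case using rhoL_Meq[OF lamW_Meq[OF Cons.prems, of u]] by simp
qed simp

lemma rhoW_Mstep: "M_step l p u v \<Longrightarrow> M_step l p (rhoW l p b u) (rhoW l p b v)"
proof (induction rule: M_step.induct)
  case (1 s x y t)
  define c where "c = lamW l p t b"
  have lw: "lamW l p [x, y] = lamW l p [l x y, p y x]"
    using lamW_Mstep[OF M_step.intros[of l p "[]" x y "[]"]] by simp
  have A: "rhoW l p b (s @ [x, y] @ t) = rhoW l p (lamW l p [x,y] c) s @ [rhoL l p (lamL l p y c) x, rhoL l p c y] @ rhoW l p b t"
    by (simp only: L4 L1 c_def) simp
  have B: "rhoW l p b (s @ [l x y, p y x] @ t) = rhoW l p (lamW l p [x,y] c) s @ [rhoL l p (lamL l p (p y x) c) (l x y), rhoL l p c (p y x)] @ rhoW l p b t"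
    by (simp only: L4 L1 c_def lw) simp
  have e3: "l (rhoL l p (lamL l p y c) x) (rhoL l p c y) = rhoL l p (lamL l p (p y x) c) (l x y)"
    by (rule P3)
  have e4: "p (rhoL l p c y) (rhoL l p (lamL l p y c) x) = rhoL l p c (p y x)"
    by (rule P2[symmetric])
  have M: "M_step l p (rhoW l p (lamW l p [x,y] c) s @ [rhoL l p (lamL l p y c) x, rhoL l p c y] @ rhoW l p b t)
     (rhoW l p (lamW l p [x,y] c) s @ [l (rhoL l p (lamL l p y c) x) (rhoL l p c y), p (rhoL l p c y) (rhoL l p (lamL l p y c) x)] @ rhoW l p b t)"
    by (rule M_step.intros)
  show ?case unfolding A B using M[unfolded e3 e4] .
qed

lemma rhoW_Meq: "u \<approx> v \<Longrightarrow> rhoW l p b u \<approx> rhoW l p b v"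
  unfolding Meq_def by (rule equivclp_map) (auto dest: rhoW_Mstep)

lemma G1: "(x # v) \<approx> (lamL l p x v @ [rhoL l p v x])"
proof (induction v arbitrary: x)
  case Nil then show ?case by simp
next
  case (Cons z v)
  have "(x # z # v) \<approx> ([l x z, p z x] @ v)" using Meq_appR[OF Meq_step, of x z v] by simp
  also have "([l x z, p z x] @ v) = l x z # (p z x # v)" by simp
  also have "\<dots> \<approx> l x z # (lamL l p (p z x) v @ [rhoL l p v (p z x)])"
    by (rule Meq_cons[OF Cons])
  finally show ?case by simp
qed

end

context yb begin

lemma G: "(u @ v) \<approx> (lamW l p u v @ rhoW l p v u)"
proof (induction u)
  case Nil then show ?case by simp
next
  case (Cons x u)
  have "((x # u) @ v) = x # (u @ v)" by simp
  also have "\<dots> \<approx> x # (lamW l p u v @ rhoW l p v u)" by (rule Meq_cons[OF Cons])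
  also have "\<dots> = (x # lamW l p u v) @ rhoW l p v u" by simp
  also have "\<dots> \<approx> (lamL l p x (lamW l p u v) @ [rhoL l p (lamW l p u v) x]) @ rhoW l p v u"
    by (rule Meq_appR[OF G1])
  also have "\<dots> = lamW l p (x # u) v @ rhoW l p v (x # u)" by simp
  finally show ?case .
qed

lemma C1: "lamW l p u (lamW l p v w) = lamW l p (lamW l p u v) (lamW l p (rhoW l p v u) w)"
  using lamW_sub[OF G[of u v]] by (metis L1)

lemma lamW_G1: "lamW l p (lamL l p x v) (lamL l p (rhoL l p v x) w) = lamL l p x (lamW l p v w)"
proof -
  have "lamW l p (x # v) = lamW l p (lamL l p x v @ [rhoL l p v x])" by (rule lamW_sub[OF G1])
  then have "lamW l p (x # v) w = lamW l p (lamL l p x v @ [rhoL l p v x]) w" by simp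
  then show ?thesis by (simp add: L1)
qed

lemma StageB: "lamL l p (rhoL l p (lamW l p v w) x) (rhoW l p w v) = rhoW l p (lamL l p (rhoL l p v x) w) (lamL l p x v)"
proof (induction v arbitrary: x)
  case Nil then show ?case by simp
next
  case (Cons y v)
  define W where "W = lamW l p v w"
  define x' where "x' = p y x"
  have e3: "l (rhoL l p (lamL l p y W) x) (rhoL l p W y) = rhoL l p (lamL l p x' W) (l x y)"
    unfolding x'_def by (rule P3)
  have e4: "p (rhoL l p W y) (rhoL l p (lamL l p y W) x) = rhoL l p W x'"
    unfolding x'_def by (rule P2[symmetric])
  have LHS: "lamL l p (rhoL l p (lamW l p (y # v) w) x) (rhoW l p w (y # v))
     = rhoL l p (lamL l p x' W) (l x y) # rhoW l p (lamL l p (rhoL l p v x') w) (lamL l p x' v)"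
    using e3 e4 Cons.IH[of x'] by (simp add: W_def)
  have e5: "lamW l p (lamL l p x' v) (lamL l p (rhoL l p v x') w) = lamL l p x' W"
    unfolding W_def by (rule lamW_G1)
  have RHS: "rhoW l p (lamL l p (rhoL l p (y # v) x) w) (lamL l p x (y # v))
     = rhoL l p (lamL l p x' W) (l x y) # rhoW l p (lamL l p (rhoL l p v x') w) (lamL l p x' v)"
    using e5 by (simp add: x'_def)
  show ?case using LHS RHS by simp
qed

lemma C3: "lamW l p (rhoW l p (lamW l p v w) u) (rhoW l p w v) = rhoW l p (lamW l p (rhoW l p v u) w) (lamW l p u v)"
proof (induction u)
  case Nil then show ?case by simp
next
  case (Cons x u)
  define v1 where "v1 = lamW l p u v"
  define w1 where "w1 = lamW l p (rhoW l p v u) w"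
  have e: "lamW l p u (lamW l p v w) = lamW l p v1 w1" unfolding v1_def w1_def by (rule C1)
  have "lamW l p (rhoW l p (lamW l p v w) (x # u)) (rhoW l p w v)
      = lamL l p (rhoL l p (lamW l p v1 w1) x) (rhoW l p w1 v1)"
    using Cons.IH by (simp add: e v1_def w1_def)
  also have "\<dots> = rhoW l p (lamL l p (rhoL l p v1 x) w1) (lamL l p x v1)" by (rule StageB)
  also have "\<dots> = rhoW l p (lamW l p (rhoW l p v (x # u)) w) (lamW l p (x # u) v)"
    by (simp add: v1_def w1_def)
  finally show ?case .
qed

end

lemma finite_len: "finite {w :: ('x::finite) list. length w = n}"
  using finite_lists_length_eq[of "UNIV :: 'x set" n] by simp

lemma fin_order:
  fixes f :: "('x::finite) list \<Rightarrow> 'x list"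
  assumes bf: "bij f" and lf: "\<And>w. length (f w) = length w"
  shows "\<exists>k>0. \<forall>w. length w = n \<longrightarrow> (f ^^ k) w = w"
proof -
  define S where "S = {w :: 'x list. length w = n}"
  have fS: "finite S" unfolding S_def by (rule finite_len)
  have lfi: "\<And>i w. length ((f ^^ i) w) = length w"
  proof -
    fix i w show "length ((f ^^ i) w) = length w" by (induction i) (auto simp: lf)
  qed
  define g where "g i = restrict (f ^^ i) S" for i
  have gi: "g i \<in> Pi\<^sub>E S (\<lambda>_. S)" for i
    unfolding g_def by (subst restrict_PiE_iff) (auto simp: S_def lfi)
  have "range g \<subseteq> Pi\<^sub>E S (\<lambda>_. S)" using gi by auto
  then have "finite (range g)" using finite_PiE[OF fS, of "\<lambda>_. S"] fS by (metis finite_subset)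
  then have "\<not> inj g" using finite_imageD infinite_UNIV_nat by blast
  then obtain i j where ij: "g i = g j" "i \<noteq> j" unfolding inj_def by blast
  have "\<exists>i j. i < j \<and> g i = g j"
  proof (cases "i < j")
    case True then show ?thesis using ij by blast
  next
    case False then have "j < i" using ij by simp
    then show ?thesis using ij by metis
  qed
  then obtain i j where ij2: "i < j" "g i = g j" by blast
  have injf: "inj (f ^^ i)" using bf by (simp add: bij_is_inj)
  have "\<forall>w. length w = n \<longrightarrow> (f ^^ (j - i)) w = w"
  proof (intro allI impI)
    fix w :: "'x list" assume "length w = n"
    then have wS: "w \<in> S" unfolding S_def by simp
    have "(f ^^ i) w = (f ^^ j) w" using ij2(2) wS unfolding g_def by (metis restrict_apply')
    also have "(f ^^ j) = (f ^^ i) \<circ> (f ^^ (j - i))" using ij2(1) by (metis funpow_add le_add_diff_inverse less_imp_le)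
    finally have "(f ^^ i) w = (f ^^ i) ((f ^^ (j - i)) w)" by simp
    then show "(f ^^ (j - i)) w = w" using injf by (metis injD)
  qed
  then show ?thesis using ij2(1) by (intro exI[of _ "j - i"]) auto
qed

lemma pow_id_mult:
  assumes "(g ^^ k) w = w" shows "(g ^^ (k * m)) w = w"
proof (induction m)
  case 0 then show ?case by simp
next
  case (Suc m)
  have "g ^^ (k * Suc m) = (g ^^ (k * m)) \<circ> (g ^^ k)" by (metis funpow_add mult_Suc_right add.commute)
  then show ?case using Suc assms by simp
qed

lemma inv_pow2:
  fixes f :: "('x::finite) list \<Rightarrow> 'x list"
  assumes bf: "bij f" and lf: "\<And>w. length (f w) = length w"
  shows "\<exists>m. inv f u = (f ^^ m) u \<and> inv f u' = (f ^^ m) u'"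
proof -
  obtain k1 where k1: "k1 > 0" "\<forall>w. length w = length u \<longrightarrow> (f ^^ k1) w = w"
    using fin_order[OF bf lf] by blast
  obtain k2 where k2: "k2 > 0" "\<forall>w. length w = length u' \<longrightarrow> (f ^^ k2) w = w"
    using fin_order[OF bf lf] by blast
  define k where "k = k1 * k2"
  have kp: "k > 0" using k1 k2 by (simp add: k_def)
  have a: "(f ^^ k) u = u" using pow_id_mult[where g=f and k=k1 and w=u and m=k2] k1 by (simp add: k_def)
  have b: "(f ^^ k) u' = u'" using pow_id_mult[where g=f and k=k2 and w=u' and m=k1] k2 by (simp add: k_def mult.commute)
  have sk: "f ^^ k = f \<circ> (f ^^ (k - 1))" using kp by (metis Suc_diff_1 funpow.simps(2))
  have "inv f u = (f ^^ (k - 1)) u" using a sk bij_is_inj[OF bf] by (metis comp_apply inv_f_eq)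
  moreover have "inv f u' = (f ^^ (k - 1)) u'" using b sk bij_is_inj[OF bf] by (metis comp_apply inv_f_eq)
  ultimately show ?thesis by blast
qed

context yb begin

lemma inj_lamL0: "lamL l p x u = lamL l p x v \<Longrightarrow> u = v"
  proof (induction u arbitrary: x v)
    case Nil then show ?case by (cases v) auto
  next
    case (Cons y u)
    then obtain y' v' where v: "v = y' # v'" by (cases v) auto
    with Cons.prems have "l x y = l x y'" by simp
    then have "y = y'" using bl[of x] by (meson bij_is_inj injD)
    then show ?case using Cons v by auto
  qed

lemma inj_lamL: "inj (lamL l p x)" using inj_lamL0 by (meson injI)

lemma surj_lamL: "surj (lamL l p x)"
proof -
  have "\<And>v. \<exists>u. lamL l p x u = v"
  proof -
    fix v show "\<exists>u. lamL l p x u = v"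
    proof (induction v arbitrary: x)
      case Nil then show ?case by (intro exI[of _ "[]"]) simp
    next
      case (Cons z v)
      define y where "y = inv (l x) z"
      have ly: "l x y = z" unfolding y_def using bl[of x] by (simp add: bij_is_surj surj_f_inv_f)
      obtain u where "lamL l p (p y x) u = v" using Cons by blast
      then show ?case using ly by (intro exI[of _ "y # u"]) simp
    qed
  qed
  then show ?thesis by (metis surjI)
qed

lemma bij_lamL: "bij (lamL l p x)" using inj_lamL surj_lamL by (simp add: bij_def)

lemma bij_lamW: "bij (lamW l p a)"
proof (induction a)
  case Nil
  have "lamW l p [] = id" by (rule ext) simp
  then show ?case by (metis bij_id)
next
  case (Cons x a)
  have "lamW l p (x # a) = lamL l p x \<circ> lamW l p a" by (rule ext) simp
  then show ?case using Cons bij_lamL bij_comp by metis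
qed

lemma inj_lamW: "inj (lamW l p a)" using bij_lamW bij_is_inj by blast
lemma lamW_inv[simp]: "lamW l p a (inv (lamW l p a) v) = v"
  using bij_lamW bij_is_surj surj_f_inv_f by metis
lemma inv_lamW[simp]: "inv (lamW l p a) (lamW l p a v) = v"
  using inj_lamW inv_f_f by metis
lemma len_inv[simp]: "length (inv (lamW l p a) v) = length v"
  using len_lamW[of a "inv (lamW l p a) v"] by simp

lemma lamW_pow_Meq: "u \<approx> v \<Longrightarrow> (lamW l p a ^^ m) u \<approx> (lamW l p a ^^ m) v"
  by (induction m) (auto intro: lamW_Meq)

lemma inv_Meq: "u \<approx> v \<Longrightarrow> inv (lamW l p a) u \<approx> inv (lamW l p a) v"
  using inv_pow2[OF bij_lamW len_lamW, of a u v] lamW_pow_Meq by metis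

lemma reflect: "lamW l p a u \<approx> lamW l p a v \<Longrightarrow> u \<approx> v"
  using inv_Meq[of "lamW l p a u" "lamW l p a v" a] by simp

end

context yb begin

lemma S0a: assumes h: "b \<approx> b'" shows "sigmaW l p b c = sigmaW l p b' c"
  unfolding sigmaW_def lamW_sub[OF h] rhoW_sub[OF inv_Meq[OF h, of c]] ..

lemma S0b: assumes h: "c \<approx> c'" shows "sigmaW l p b c \<approx> sigmaW l p b c'"
  unfolding sigmaW_def lamW_sub[OF h] by (rule lamW_Meq[OF rhoW_Meq[OF h]])

lemma S1: "sigmaW l p (lamW l p a b) (lamW l p a c) = lamW l p a (sigmaW l p b c)"
proof -
  define d where "d = inv (lamW l p c) b"
  have b: "b = lamW l p c d" unfolding d_def by simp
  define d' where "d' = lamW l p (rhoW l p c a) d"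
  have "lamW l p (lamW l p a c) d' = lamW l p a b" unfolding d'_def b by (rule C1[symmetric])
  then have id': "inv (lamW l p (lamW l p a c)) (lamW l p a b) = d'" by (rule inv_f_eq[OF inj_lamW])
  have c3: "lamW l p (rhoW l p b a) (rhoW l p d c) = rhoW l p d' (lamW l p a c)"
    unfolding b d'_def by (rule C3)
  have "sigmaW l p (lamW l p a b) (lamW l p a c) = lamW l p (lamW l p a b) (rhoW l p d' (lamW l p a c))"
    unfolding sigmaW_def id' ..
  also have "\<dots> = lamW l p (lamW l p a b) (lamW l p (rhoW l p b a) (rhoW l p d c))" by (simp add: c3)
  also have "\<dots> = lamW l p a (lamW l p b (rhoW l p d c))" by (rule C1[symmetric])
  also have "\<dots> = lamW l p a (sigmaW l p b c)" unfolding sigmaW_def d_def ..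
  finally show ?thesis .
qed

lemma S2: "sigmaW l p (b @ a) c = sigmaW l p (lamW l p b a) (sigmaW l p b c)"
proof -
  define d where "d = inv (lamW l p c) (b @ a)"
  define d1 where "d1 = take (length b) d"
  define d2 where "d2 = drop (length b) d"
  have dd: "d = d1 @ d2" unfolding d1_def d2_def by simp
  have "lamW l p c d = b @ a" unfolding d_def by simp
  then have "lamW l p c d1 @ lamW l p (rhoW l p d1 c) d2 = b @ a" unfolding dd L2 .
  moreover have "length (lamW l p c d1) = length b" unfolding d1_def d_def by simp
  ultimately have e1: "lamW l p c d1 = b" and e2: "lamW l p (rhoW l p d1 c) d2 = a" by auto
  define e where "e = rhoW l p d1 c"
  have i1: "inv (lamW l p c) b = d1" using e1 by (rule inv_f_eq[OF inj_lamW])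
  have i2: "inv (lamW l p e) a = d2" using e2 unfolding e_def by (rule inv_f_eq[OF inj_lamW])
  have "sigmaW l p (b @ a) c = lamW l p b (lamW l p a (rhoW l p d2 e))"
    unfolding sigmaW_def d_def[symmetric] dd L1 L3 e_def ..
  also have "\<dots> = lamW l p b (sigmaW l p a e)" unfolding sigmaW_def i2 ..
  also have "\<dots> = sigmaW l p (lamW l p b a) (lamW l p b e)" by (rule S1[symmetric])
  also have "lamW l p b e = sigmaW l p b c" unfolding sigmaW_def i1 e_def ..
  finally show ?thesis .
qed

lemma S3: "sigmaW l p (plusW l p a b) c = sigmaW l p b (sigmaW l p a c)"
  unfolding plusW_def S2 by simp

lemma T_aux: assumes "l x y = x" shows "p y x = l y (p (inv (l y) y) y)"
proof -
  define w where "w = inv (l y) y"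
  have lw: "l y w = y" unfolding w_def using bl[of y] by (simp add: bij_is_surj surj_f_inv_f)
  have A: "l y z = l (p y x) z" for z
  proof -
    have "l x (l y z) = l (l x y) (l (p y x) z)" by (rule Y1)
    then have "l x (l y z) = l x (l (p y x) z)" using assms by simp
    then show ?thesis using bl[of x] by (meson bij_is_inj injD)
  qed
  have "l (p (l y w) x) (p w y) = p (l (p y x) w) (l x y)" by (rule Y3)
  then have "l (p y x) (p w y) = p y x" using lw A[of w] assms by simp
  then show ?thesis using A[of "p w y"] unfolding w_def by simp
qed

lemma T_inj: assumes h1: "l x y = x" and h2: "l x' y = x'" shows "x = x'"
proof -
  have "p y x = p y x'" using T_aux[OF h1] T_aux[OF h2] by simp
  then show ?thesis using bp[of y] by (meson bij_is_inj injD)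
qed

definition sim where "sim a a' \<longleftrightarrow> (\<forall>c. lamW l p a c \<approx> lamW l p a' c) \<and> (\<forall>c. sigmaW l p a c \<approx> sigmaW l p a' c)"

lemma lam_single: "lamW l p a [t] \<approx> lamW l p a' [t] \<Longrightarrow> lamW l p a [t] = lamW l p a' [t]"
proof -
  assume h: "lamW l p a [t] \<approx> lamW l p a' [t]"
  obtain z where z: "lamW l p a [t] = [z]" using len_lamW[of a "[t]"] by (cases "lamW l p a [t]") auto
  then have "lamW l p a' [t] = [z]" using h by (intro Meq_single) simp
  then show ?thesis using z by simp
qed

lemma K1: assumes "sim a a'" shows "sim (lamL l p x a) (lamL l p x a')"
proof -
  have sg: "\<forall>c. sigmaW l p (lamL l p x a) c \<approx> sigmaW l p (lamL l p x a') c"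
  proof
    fix c
    define c0 where "c0 = inv (lamW l p [x]) c"
    have c: "c = lamW l p [x] c0" unfolding c0_def by (rule lamW_inv[symmetric])
    have e1: "sigmaW l p (lamW l p [x] a) (lamW l p [x] c0) = lamW l p [x] (sigmaW l p a c0)" by (rule S1)
    have e2: "sigmaW l p (lamW l p [x] a') (lamW l p [x] c0) = lamW l p [x] (sigmaW l p a' c0)" by (rule S1)
    have "sigmaW l p a c0 \<approx> sigmaW l p a' c0" using assms unfolding sim_def by blast
    then have "lamW l p [x] (sigmaW l p a c0) \<approx> lamW l p [x] (sigmaW l p a' c0)" by (rule lamW_Meq)
    then have "sigmaW l p (lamW l p [x] a) (lamW l p [x] c0) \<approx> sigmaW l p (lamW l p [x] a') (lamW l p [x] c0)"
      unfolding e1 e2 .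
    then have "sigmaW l p (lamW l p [x] a) c \<approx> sigmaW l p (lamW l p [x] a') c" unfolding c[symmetric] .
    then show "sigmaW l p (lamL l p x a) c \<approx> sigmaW l p (lamL l p x a') c" by (simp only: lamW_single)
  qed
  define y where "y = lamL l p x a"
  define y' where "y' = lamL l p x a'"
  define t where "t = rhoL l p a x"
  define t' where "t' = rhoL l p a' x"
  have fy: "lamL l p x (lamW l p a c) = lamW l p y (lamL l p t c)" for c
  proof -
    have "lamW l p (x # a) = lamW l p (y @ [t])" unfolding y_def t_def by (rule lamW_sub[OF G1])
    then have "lamW l p (x # a) c = lamW l p (y @ [t]) c" by simp
    then show ?thesis by (simp add: L1)
  qed
  have fy': "lamL l p x (lamW l p a' c) = lamW l p y' (lamL l p t' c)" for c
  proof -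
    have "lamW l p (x # a') = lamW l p (y' @ [t'])" unfolding y'_def t'_def by (rule lamW_sub[OF G1])
    then have "lamW l p (x # a') c = lamW l p (y' @ [t']) c" by simp
    then show ?thesis by (simp add: L1)
  qed
  have ia: "inv (lamW l p [x]) y = a" unfolding y_def by (rule inv_f_eq[OF inj_lamW]) simp
  have ia': "inv (lamW l p [x]) y' = a'" unfolding y'_def by (rule inv_f_eq[OF inj_lamW]) simp
  have sy: "sigmaW l p y [x] = lamW l p y [t]" unfolding sigmaW_def ia t_def by simp
  have sy': "sigmaW l p y' [x] = lamW l p y' [t']" unfolding sigmaW_def ia' t'_def by simp
  have "sigmaW l p y [x] \<approx> sigmaW l p y' [x]" using sg unfolding y_def y'_def by blast
  then have "lamW l p y [t] \<approx> lamW l p y' [t']" unfolding sy sy' .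
  moreover obtain z where z: "lamW l p y [t] = [z]" using len_lamW[of y "[t]"] by (cases "lamW l p y [t]") auto
  ultimately have "lamW l p y' [t'] = [z]" by (intro Meq_single) simp
  then have eqz: "lamW l p y [t] = lamW l p y' [t']" using z by simp
  define T where "T u = inv (l u) u" for u
  have lT: "l u (T u) = u" for u unfolding T_def using bl[of u] by (simp add: bij_is_surj surj_f_inv_f)
  have "lamW l p y [t] = lamL l p x (lamW l p a [T t])"
    using fy[of "[T t]"] lT[of t] by simp
  moreover have "lamW l p y' [t'] = lamL l p x (lamW l p a' [T t'])"
    using fy'[of "[T t']"] lT[of t'] by simp
  moreover have "lamW l p a' [T t'] = lamW l p a [T t']"
  proof -
    have "lamW l p a [T t'] \<approx> lamW l p a' [T t']" using assms unfolding sim_def by blast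
    then have "lamW l p a [T t'] = lamW l p a' [T t']" by (rule lam_single)
    then show ?thesis by (rule sym)
  qed
  ultimately have "lamL l p x (lamW l p a [T t]) = lamL l p x (lamW l p a [T t'])" using eqz by simp
  then have "lamW l p a [T t] = lamW l p a [T t']" by (rule injD[OF inj_lamL])
  then have "[T t] = [T t']" by (rule injD[OF inj_lamW])
  then have "T t = T t'" by simp
  then have tt: "t = t'" using T_inj[of t "T t" t'] lT[of t] lT[of t'] by simp
  have lm: "\<forall>c. lamW l p y c \<approx> lamW l p y' c"
  proof
    fix c
    define c0 where "c0 = inv (lamL l p t) c"
    have c: "c = lamL l p t c0" unfolding c0_def using bij_lamL by (simp add: bij_is_surj surj_f_inv_f)
    have "lamW l p a c0 \<approx> lamW l p a' c0" using assms unfolding sim_def by blast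
    then have "lamL l p x (lamW l p a c0) \<approx> lamL l p x (lamW l p a' c0)" by (rule lamL_Meq)
    then have "lamW l p y (lamL l p t c0) \<approx> lamW l p y' (lamL l p t' c0)" unfolding fy fy' .
    then show "lamW l p y c \<approx> lamW l p y' c" unfolding c[symmetric] tt[symmetric] .
  qed
  show ?thesis unfolding sim_def using lm sg unfolding y_def y'_def by blast
qed

lemma K: "sim a a' \<Longrightarrow> sim (lamW l p d a) (lamW l p d a')"
  by (induction d) (auto intro: K1)

lemma Kpow: "sim a a' \<Longrightarrow> sim ((lamW l p d ^^ m) a) ((lamW l p d ^^ m) a')"
  by (induction m) (auto intro: K)

lemma Kinv: assumes "sim a a'" shows "sim (inv (lamW l p d) a) (inv (lamW l p d) a')"
proof -
  obtain m where "inv (lamW l p d) a = (lamW l p d ^^ m) a" "inv (lamW l p d) a' = (lamW l p d ^^ m) a'"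
    using inv_pow2[OF bij_lamW len_lamW, of d a a'] by blast
  then show ?thesis using Kpow[OF assms] by simp
qed

lemma R: assumes "sim a a'" shows "rhoW l p a c \<approx> rhoW l p a' c"
proof -
  define y where "y = lamW l p c a"
  define y' where "y' = lamW l p c a'"
  have s: "sim y y'" unfolding y_def y'_def using K assms .
  have "sigmaW l p y c = lamW l p y (rhoW l p a c)" unfolding sigmaW_def y_def by simp
  moreover have "sigmaW l p y' c = lamW l p y' (rhoW l p a' c)" unfolding sigmaW_def y'_def by simp
  moreover have "sigmaW l p y c \<approx> sigmaW l p y' c" using s unfolding sim_def by blast
  ultimately have "lamW l p y (rhoW l p a c) \<approx> lamW l p y' (rhoW l p a' c)" by simp
  moreover have "lamW l p y' (rhoW l p a' c) \<approx> lamW l p y (rhoW l p a' c)" using s Meq_sym unfolding sim_def by blast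
  ultimately have "lamW l p y (rhoW l p a c) \<approx> lamW l p y (rhoW l p a' c)" by (rule Meq_trans)
  then show ?thesis by (rule reflect)
qed

lemma lamInv_sim: assumes "\<forall>c. lamW l p b c \<approx> lamW l p b' c"
  shows "inv (lamW l p b) u \<approx> inv (lamW l p b') u"
proof -
  have "lamW l p b' (inv (lamW l p b') u) \<approx> lamW l p b (inv (lamW l p b') u)" using assms Meq_sym by blast
  then have "lamW l p b (inv (lamW l p b) u) \<approx> lamW l p b (inv (lamW l p b') u)" by simp
  then show ?thesis by (rule reflect)
qed

end

lemma sol_Y:
  assumes "is_solution l p"
  shows "l x (l y z) = l (l x y) (l (p y x) z) \<and> p z (p y x) = p (p z y) (p (l y z) x)
     \<and> l (p (l y z) x) (p z y) = p (l (p y x) z) (l x y)"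
proof -
  have "(r12 (sol_r l p) \<circ> r23 (sol_r l p) \<circ> r12 (sol_r l p)) (x, y, z)
      = (r23 (sol_r l p) \<circ> r12 (sol_r l p) \<circ> r23 (sol_r l p)) (x, y, z)"
    using assms unfolding is_solution_def by simp
  then show ?thesis by (simp add: sol_r_def r12_def r23_def)
qed

context yb begin

lemma part1:
  assumes h: "sim a a'"
  shows "map_eqA l p (lamW l p (a @ b)) (lamW l p (a' @ b))
     \<and> map_eqA l p (rhoW l p (b @ a)) (rhoW l p (b @ a'))
     \<and> map_eqA l p (sigmaW l p (b @ a)) (sigmaW l p (b @ a'))
     \<and> map_eqA l p (lamW l p (plusW l p a b)) (lamW l p (plusW l p a' b))
     \<and> map_eqA l p (rhoW l p (plusW l p a b)) (rhoW l p (plusW l p a' b))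
     \<and> map_eqA l p (sigmaW l p (plusW l p a b)) (sigmaW l p (plusW l p a' b))"
proof -
  have hl: "\<And>c. lamW l p a c \<approx> lamW l p a' c" and hs: "\<And>c. sigmaW l p a c \<approx> sigmaW l p a' c"
    using h unfolding sim_def by auto
  define e where "e = inv (lamW l p a) b"
  define e' where "e' = inv (lamW l p a') b"
  have ee: "e \<approx> e'" unfolding e_def e'_def by (rule lamInv_sim) (use hl in blast)
  have 1: "map_eqA l p (lamW l p (a @ b)) (lamW l p (a' @ b))"
    unfolding map_eqA_def L1 using hl by blast
  have 2: "map_eqA l p (rhoW l p (b @ a)) (rhoW l p (b @ a'))"
    unfolding map_eqA_def L3 using R[OF h] by blast
  have 3: "map_eqA l p (sigmaW l p (b @ a)) (sigmaW l p (b @ a'))"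
    unfolding map_eqA_def S2 using K[OF h, of b] unfolding sim_def by blast
  have 4: "map_eqA l p (lamW l p (plusW l p a b)) (lamW l p (plusW l p a' b))"
    unfolding map_eqA_def plusW_def L1 e_def[symmetric] e'_def[symmetric] lamW_sub[OF ee] using hl by blast
  have 5: "map_eqA l p (rhoW l p (plusW l p a b)) (rhoW l p (plusW l p a' b))"
    unfolding map_eqA_def plusW_def L3 e_def[symmetric] e'_def[symmetric] rhoW_sub[OF ee]
    using R[OF h] rhoW_Meq by blast
  have 6: "map_eqA l p (sigmaW l p (plusW l p a b)) (sigmaW l p (plusW l p a' b))"
    unfolding map_eqA_def S3 using hs S0b by blast
  show ?thesis using 1 2 3 4 5 6 by blast
qed

lemma part2:
  assumes h: "sim b b'"
  shows "map_eqA l p (lamW l p (a @ b)) (lamW l p (a @ b'))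
     \<and> map_eqA l p (rhoW l p (b @ a)) (rhoW l p (b' @ a))
     \<and> map_eqA l p (sigmaW l p (b @ a)) (sigmaW l p (b' @ a))
     \<and> map_eqA l p (lamW l p (plusW l p a b)) (lamW l p (plusW l p a b'))
     \<and> map_eqA l p (rhoW l p (plusW l p a b)) (rhoW l p (plusW l p a b'))
     \<and> map_eqA l p (sigmaW l p (plusW l p a b)) (sigmaW l p (plusW l p a b'))"
proof -
  have hl: "\<And>c. lamW l p b c \<approx> lamW l p b' c" and hs: "\<And>c. sigmaW l p b c \<approx> sigmaW l p b' c"
    using h unfolding sim_def by auto
  define e where "e = inv (lamW l p a) b"
  define e' where "e' = inv (lamW l p a) b'"
  have ee: "sim e e'" unfolding e_def e'_def by (rule Kinv[OF h])
  have 1: "map_eqA l p (lamW l p (a @ b)) (lamW l p (a @ b'))"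
    unfolding map_eqA_def L1 using hl lamW_Meq by blast
  have 2: "map_eqA l p (rhoW l p (b @ a)) (rhoW l p (b' @ a))"
    unfolding map_eqA_def L3 using R[OF h] rhoW_Meq by blast
  have 3: "map_eqA l p (sigmaW l p (b @ a)) (sigmaW l p (b' @ a))"
    unfolding map_eqA_def S2
  proof
    fix c
    have "sigmaW l p (lamW l p b a) (sigmaW l p b c) = sigmaW l p (lamW l p b' a) (sigmaW l p b c)"
      by (rule S0a[OF hl])
    moreover have "sigmaW l p (lamW l p b' a) (sigmaW l p b c) \<approx> sigmaW l p (lamW l p b' a) (sigmaW l p b' c)"
      by (rule S0b[OF hs])
    ultimately show "sigmaW l p (lamW l p b a) (sigmaW l p b c) \<approx> sigmaW l p (lamW l p b' a) (sigmaW l p b' c)"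
      by simp
  qed
  have 4: "map_eqA l p (lamW l p (plusW l p a b)) (lamW l p (plusW l p a b'))"
    unfolding map_eqA_def plusW_def L1 e_def[symmetric] e'_def[symmetric]
    using ee lamW_Meq unfolding sim_def by blast
  have 5: "map_eqA l p (rhoW l p (plusW l p a b)) (rhoW l p (plusW l p a b'))"
    unfolding map_eqA_def plusW_def L3 e_def[symmetric] e'_def[symmetric]
    using R[OF ee] by blast
  have 6: "map_eqA l p (sigmaW l p (plusW l p a b)) (sigmaW l p (plusW l p a b'))"
    unfolding map_eqA_def S3 using hs by blast
  show ?thesis using 1 2 3 4 5 6 by blast
qed

end

theorem lemma2p2:
  fixes l p :: "'x::finite \<Rightarrow> 'x \<Rightarrow> 'x"
    and a a' b b' :: "'x list"
  assumes "is_solution l p" and "nondegenerate l p"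
  shows
   "(map_eqA l p (sigmaW l p a) (sigmaW l p a') \<and> map_eqA l p (lamW l p a) (lamW l p a') \<longrightarrow>
       map_eqA l p (lamW l p (a @ b)) (lamW l p (a' @ b))
     \<and> map_eqA l p (rhoW l p (b @ a)) (rhoW l p (b @ a'))
     \<and> map_eqA l p (sigmaW l p (b @ a)) (sigmaW l p (b @ a'))
     \<and> map_eqA l p (lamW l p (plusW l p a b)) (lamW l p (plusW l p a' b))
     \<and> map_eqA l p (rhoW l p (plusW l p a b)) (rhoW l p (plusW l p a' b))
     \<and> map_eqA l p (sigmaW l p (plusW l p a b)) (sigmaW l p (plusW l p a' b)))
  \<and> (map_eqA l p (sigmaW l p b) (sigmaW l p b') \<and> map_eqA l p (lamW l p b) (lamW l p b') \<longrightarrow>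
       map_eqA l p (lamW l p (a @ b)) (lamW l p (a @ b'))
     \<and> map_eqA l p (rhoW l p (b @ a)) (rhoW l p (b' @ a))
     \<and> map_eqA l p (sigmaW l p (b @ a)) (sigmaW l p (b' @ a))
     \<and> map_eqA l p (lamW l p (plusW l p a b)) (lamW l p (plusW l p a b'))
     \<and> map_eqA l p (rhoW l p (plusW l p a b)) (rhoW l p (plusW l p a b'))
     \<and> map_eqA l p (sigmaW l p (plusW l p a b)) (sigmaW l p (plusW l p a b')))"
proof -
  interpret yb l p
  proof
    fix x y z
    show "l x (l y z) = l (l x y) (l (p y x) z)" using sol_Y[OF assms(1)] by blast
    show "p z (p y x) = p (p z y) (p (l y z) x)" using sol_Y[OF assms(1)] by blast
    show "l (p (l y z) x) (p z y) = p (l (p y x) z) (l x y)" using sol_Y[OF assms(1)] by blast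
    show "bij (l x)" using assms(2) unfolding nondegenerate_def by blast
    show "bij (p y)" using assms(2) unfolding nondegenerate_def by blast
  qed
  show ?thesis
  proof (rule conjI; rule impI)
    assume "map_eqA l p (sigmaW l p a) (sigmaW l p a') \<and> map_eqA l p (lamW l p a) (lamW l p a')"
    then have "sim a a'" unfolding sim_def map_eqA_def by blast
    then show "map_eqA l p (lamW l p (a @ b)) (lamW l p (a' @ b))
     \<and> map_eqA l p (rhoW l p (b @ a)) (rhoW l p (b @ a'))
     \<and> map_eqA l p (sigmaW l p (b @ a)) (sigmaW l p (b @ a'))
     \<and> map_eqA l p (lamW l p (plusW l p a b)) (lamW l p (plusW l p a' b))
     \<and> map_eqA l p (rhoW l p (plusW l p a b)) (rhoW l p (plusW l p a' b))
     \<and> map_eqA l p (sigmaW l p (plusW l p a b)) (sigmaW l p (plusW l p a' b))" by (rule part1)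
  next
    assume "map_eqA l p (sigmaW l p b) (sigmaW l p b') \<and> map_eqA l p (lamW l p b) (lamW l p b')"
    then have "sim b b'" unfolding sim_def map_eqA_def by blast
    then show "map_eqA l p (lamW l p (a @ b)) (lamW l p (a @ b'))
     \<and> map_eqA l p (rhoW l p (b @ a)) (rhoW l p (b' @ a))
     \<and> map_eqA l p (sigmaW l p (b @ a)) (sigmaW l p (b' @ a))
     \<and> map_eqA l p (lamW l p (plusW l p a b)) (lamW l p (plusW l p a b'))
     \<and> map_eqA l p (rhoW l p (plusW l p a b)) (rhoW l p (plusW l p a b'))
     \<and> map_eqA l p (sigmaW l p (plusW l p a b)) (sigmaW l p (plusW l p a b'))" by (rule part2)
  qed
qed

end
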